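(* Assume $c+\kappa>0$. (a) $R(\hat t_XX)R(\hat t_YY)$ and $R(\hat t_YY)R(\hat t_XX)$ are both rotations by angle $\pi$ (and their axes are orthogonal to $W_+$). (b) For all $t\in\mathbb R$: $R(\hat t_XX)R(\hat t_YY)=R(-\hat t_YY)R(-\hat t_XX)$, $R(\hat t_YY)R(\hat t_XX)=R(-\hat t_XX)R(-\hat t_YY)$, $R(\hat t_YY)R(\hat t_XX)R(tW_+)=R(-tW_+)R(\hat t_YY)R(\hat t_XX)$, $R(\hat t_XX)R(\hat t_YY)R(-tW_+)=R(tW_+)R(\hat t_XX)R(\hat t_YY)$. (c) If $\kappa=0$, then $R(\pi Y)R(tW_+)=R(-tW_+)R(\pi Y)$ for all $t\in\mathbb R$.
   Context: Fix unit vectors $X,Y\in\mathbb R^3$ with angle $\alpha\in(0,\pi/2]$, $c=\cos\alpha\in[0,1)$, and $\kappa\in[0,1]$. For a unit vector $v$, $R(tv)$ is rotation by angle $t$ about $v$ (counterclockwise viewed from the tip); for nonzero non-unit $v$, $R(tv):=R((t|v|)v/|v|)$. $W_+=(1+\kappa c)X-(\kappa+c)Y$. When $c+\kappa>0$: $\hat t_X=\arccos\frac{c-\kappa}{c+\kappa}$ and $\hat t_Y=\arccos\left(-\frac{1-\kappa c}{1+\kappa c}\right)$, both in $[0,\pi]$. *)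

theory Defs
  imports "HOL-Analysis.Analysis" "HOL-Analysis.Cross3"
begin

text \<open>Rotation R(w) of R^3 by angle norm w about the axis w / norm w
  (counterclockwise viewed from the tip, i.e. right-hand rule), given by
  the Rodrigues formula. For a unit vector v, rot (t *R v) is rotation by
  angle t about v; for nonzero non-unit v, rot (t *R v) is rotation by
  t * norm v about v / norm v, matching the paper's convention. rot 0 = id.\<close>
definition rot :: "real^3 \<Rightarrow> real^3 \<Rightarrow> real^3" where
  "rot w x = (let \<theta> = norm w; u = (1 / norm w) *\<^sub>R w in
      cos \<theta> *\<^sub>R x + sin \<theta> *\<^sub>R (cross3 u x) + ((1 - cos \<theta>) * (u \<bullet> x)) *\<^sub>R u)"

end

theory Submission
  imports Defs
begin


lemma cross_cross: "cross3 x (cross3 y z) = (x \<bullet> z) *\<^sub>R y - (x \<bullet> y) *\<^sub>R z"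
  by (rule Lagrange)

lemma lagrange: "(X \<bullet> cross3 Y Z) *\<^sub>R x = (x \<bullet> cross3 Y Z) *\<^sub>R X + (x \<bullet> cross3 Z X) *\<^sub>R Y + (x \<bullet> cross3 X Y) *\<^sub>R Z"
  unfolding vec_eq_iff forall_3 by (simp add: cross3_def inner_vec_def sum_3 algebra_simps)

lemma linear_rot: "linear (rot w)"
  by (rule linearI) (simp_all add: rot_def Let_def cross_add_right cross_mult_right inner_add_right algebra_simps)

lemma rot_unit:
  assumes "norm v = 1"
  shows "rot (t *\<^sub>R v) x = cos t *\<^sub>R x + sin t *\<^sub>R cross3 v x + ((1 - cos t) * (v \<bullet> x)) *\<^sub>R v"
proof (cases "t = 0")
  case True then show ?thesis by (simp add: rot_def)
next
  case False
  show ?thesis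
  proof (cases "t > 0")
    case True then show ?thesis using assms by (simp add: rot_def Let_def cross_mult_left)
  next
    case False
    with \<open>t \<noteq> 0\<close> have "t < 0" by simp
    then have "abs t = - t" by simp
    then show ?thesis using assms \<open>t<0\<close> by (simp add: rot_def Let_def cross_mult_left)
  qed
qed

lemma rot_inv:
  assumes "norm v = 1"
  shows "rot ((- t) *\<^sub>R v) (rot (t *\<^sub>R v) x) = x"
proof -
  have vv: "v \<bullet> v = 1" using assms by (simp add: norm_eq_1)
  have s: "sin t * sin t = 1 - cos t * cos t" by (simp add: sin_squared_eq power2_eq_square[symmetric])
  have h: "cos t * (cos t * a) + sin t * (sin t * a) = a" for a
  proof -
    have "cos t * cos t + sin t * sin t = 1" using sin_cos_squared_add[of t] by (simp add: power2_eq_square)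
    then show ?thesis by (metis (no_types) distrib_right mult.assoc mult.left_neutral)
  qed
  show ?thesis
    unfolding rot_unit[OF assms]
    apply (simp add: cross_add_right cross_mult_right inner_add_right cross_cross vv dot_cross_self Cross3.right_diff_distrib algebra_simps s power2_eq_square)
    apply (simp only: scaleR_add_left[symmetric] h)
    done
qed

lemma rot_pi:
  assumes "norm u = 1"
  shows "rot (pi *\<^sub>R u) x = (2 * (u \<bullet> x)) *\<^sub>R u - x"
  unfolding rot_unit[OF assms] by simp

lemma P_invol:
  assumes "norm u = 1"
  shows "rot (pi *\<^sub>R u) (rot (pi *\<^sub>R u) x) = x"
proof -
  have vv: "u \<bullet> u = 1" using assms by (simp add: norm_eq_1)
  show ?thesis unfolding rot_pi[OF assms] by (simp add: inner_diff_right vv algebra_simps)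
qed

lemma P_conj:
  assumes "norm u = 1" "u \<bullet> w = 0"
  shows "rot (pi *\<^sub>R u) (rot w x) = rot (- w) (rot (pi *\<^sub>R u) x)"
proof -
  have uu: "u \<bullet> u = 1" using assms by (simp add: norm_eq_1)
  define n where "n = (1 / norm w) *\<^sub>R w"
  have un: "u \<bullet> n = 0" using assms(2) by (simp add: n_def)
  have nu: "n \<bullet> u = 0" using un by (simp add: inner_commute)
  have key: "(u \<bullet> cross3 n x) *\<^sub>R u - cross3 n x = - (u \<bullet> x) *\<^sub>R cross3 n u"
  proof -
    have "cross3 u (cross3 u (cross3 n x)) = (u \<bullet> cross3 n x) *\<^sub>R u - cross3 n x"
      using cross_cross[of u u "cross3 n x"] by (simp add: uu)
    moreover have "cross3 u (cross3 n x) = (u \<bullet> x) *\<^sub>R n" by (simp add: cross_cross un)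
    ultimately show ?thesis by (simp add: cross_mult_right cross_skew[of u n])
  qed
  have nw: "(1 / norm w) *\<^sub>R (- w) = - n" by (simp add: n_def)
  have rw: "rot w y = cos (norm w) *\<^sub>R y + sin (norm w) *\<^sub>R cross3 n y + ((1 - cos (norm w)) * (n \<bullet> y)) *\<^sub>R n" for y
    by (simp add: rot_def Let_def n_def)
  have rmw: "rot (- w) y = cos (norm w) *\<^sub>R y - sin (norm w) *\<^sub>R cross3 n y + ((1 - cos (norm w)) * (n \<bullet> y)) *\<^sub>R n" for y
    using nw by (simp add: rot_def Let_def n_def)
  have fin: "(2 * sin (norm w)) *\<^sub>R ((u \<bullet> x) *\<^sub>R cross3 n u + (u \<bullet> cross3 n x) *\<^sub>R u) = (2 * sin (norm w)) *\<^sub>R cross3 n x"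
    using key by (simp add: algebra_simps)
  show ?thesis
    unfolding rot_pi[OF assms(1)] rw rmw
    apply (simp add: cross_add_right cross_mult_right inner_add_right inner_diff_right Cross3.right_diff_distrib un nu dot_cross_self inner_commute[of u n])
    using fin
    apply (simp add: algebra_simps)
    apply (simp add: vec_eq_iff)
    done
qed

lemma comb3:
  assumes "linear f" "f X = a1 *\<^sub>R X + b1 *\<^sub>R Y + d1 *\<^sub>R Z"
    "f Y = a2 *\<^sub>R X + b2 *\<^sub>R Y + d2 *\<^sub>R Z" "f Z = a3 *\<^sub>R X + b3 *\<^sub>R Y + d3 *\<^sub>R Z"
  shows "f (a *\<^sub>R X + b *\<^sub>R Y + d *\<^sub>R Z) = (a*a1 + b*a2 + d*a3) *\<^sub>R X + (a*b1 + b*b2 + d*b3) *\<^sub>R Y + (a*d1 + b*d2 + d*d3) *\<^sub>R Z"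
  using assms by (simp add: linear_add linear_scale algebra_simps)

lemma combeq:
  "a = a' \<Longrightarrow> b = b' \<Longrightarrow> d = d' \<Longrightarrow> a *\<^sub>R X + b *\<^sub>R Y + d *\<^sub>R Z = a' *\<^sub>R X + b' *\<^sub>R Y + d' *\<^sub>R Z"
  by simp

lemma basis_ext:
  fixes f g :: "real^3 \<Rightarrow> real^3"
  assumes "linear f" "linear g" "X \<bullet> cross3 Y Z \<noteq> 0"
    "f X = g X" "f Y = g Y" "f Z = g Z"
  shows "f = g"
proof
  fix x :: "real^3"
  define V where "V = X \<bullet> cross3 Y Z"
  have V0: "V \<noteq> 0" using assms(3) by (simp add: V_def)
  have "x = (1/V) *\<^sub>R (V *\<^sub>R x)" using V0 by simp
  also have "V *\<^sub>R x = (x \<bullet> cross3 Y Z) *\<^sub>R X + (x \<bullet> cross3 Z X) *\<^sub>R Y + (x \<bullet> cross3 X Y) *\<^sub>R Z"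
    unfolding V_def by (rule lagrange)
  also have "(1/V) *\<^sub>R ((x \<bullet> cross3 Y Z) *\<^sub>R X + (x \<bullet> cross3 Z X) *\<^sub>R Y + (x \<bullet> cross3 X Y) *\<^sub>R Z) = ((1/V) * (x \<bullet> cross3 Y Z)) *\<^sub>R X + ((1/V) * (x \<bullet> cross3 Z X)) *\<^sub>R Y + ((1/V) * (x \<bullet> cross3 X Y)) *\<^sub>R Z"
    by (simp only: scaleR_add_right scaleR_scaleR)
  finally obtain a b d where x: "x = a *\<^sub>R X + b *\<^sub>R Y + d *\<^sub>R Z" by blast
  have "f (a *\<^sub>R X + b *\<^sub>R Y + d *\<^sub>R Z) = g (a *\<^sub>R X + b *\<^sub>R Y + d *\<^sub>R Z)"
    by (simp only: linear_add[OF assms(1)] linear_add[OF assms(2)] linear_scale[OF assms(1)] linear_scale[OF assms(2)] assms(4-6))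
  then show "f x = g x" by (simp only: x)
qed

lemma rot_pi_V:
  assumes "V \<bullet> V > 0"
  shows "norm ((1 / norm V) *\<^sub>R V) = 1"
    "rot (pi *\<^sub>R ((1 / norm V) *\<^sub>R V)) y = (2 * (V \<bullet> y) / (V \<bullet> V)) *\<^sub>R V - y"
proof -
  have nz: "V \<noteq> 0" using assms by auto
  show n1: "norm ((1 / norm V) *\<^sub>R V) = 1" using nz by simp
  show "rot (pi *\<^sub>R ((1 / norm V) *\<^sub>R V)) y = (2 * (V \<bullet> y) / (V \<bullet> V)) *\<^sub>R V - y"
    unfolding rot_pi[OF n1] using nz by (simp add: power2_norm_eq_inner[symmetric] power2_eq_square)
qed



lemma trigX:
  fixes p q :: real
  assumes "0 \<le> p" "0 \<le> q" "p^2 + q^2 > 0"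
  shows "cos (arccos ((p^2 - q^2) / (p^2 + q^2))) = (p^2 - q^2) / (p^2 + q^2)"
    "sin (arccos ((p^2 - q^2) / (p^2 + q^2))) = 2 * p * q / (p^2 + q^2)"
proof -
  have b: "\<bar>(p^2 - q^2) / (p^2 + q^2)\<bar> \<le> 1" using assms
    by (simp add: abs_le_iff divide_le_eq le_divide_eq)
  then have "- 1 \<le> (p^2 - q^2) / (p^2 + q^2)" "(p^2 - q^2) / (p^2 + q^2) \<le> 1" unfolding abs_le_iff by linarith+
  then show "cos (arccos ((p^2 - q^2) / (p^2 + q^2))) = (p^2 - q^2) / (p^2 + q^2)"
    by (rule cos_arccos)
  have "sqrt (1 - ((p^2 - q^2) / (p^2 + q^2))^2) = 2 * p * q / (p^2 + q^2)"
    apply (rule real_sqrt_unique)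
    subgoal
    proof -
      have D: "p^2 + q^2 \<noteq> 0" using assms(3) by linarith
      show ?thesis using D by (simp add: power_divide divide_simps) algebra
    qed
    using assms by simp
  then show "sin (arccos ((p^2 - q^2) / (p^2 + q^2))) = 2 * p * q / (p^2 + q^2)"
    using b by (simp add: sin_arccos_abs)
qed

lemma trigY:
  fixes p q :: real
  assumes "0 \<le> p" "0 \<le> q" "p^2 < 1" "q^2 \<le> 1"
  shows "cos (arccos (- (1 - q^2 * p^2) / (1 + q^2 * p^2))) = - (1 - q^2 * p^2) / (1 + q^2 * p^2)"
    "sin (arccos (- (1 - q^2 * p^2) / (1 + q^2 * p^2))) = 2 * p * q / (1 + q^2 * p^2)"
proof -
  have pq: "q^2 * p^2 \<le> 1" using assms by (simp add: mult_le_one)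
  have pos: "1 + q^2 * p^2 > 0" by (simp add: add_pos_nonneg)
  have b: "\<bar>- (1 - q^2 * p^2) / (1 + q^2 * p^2)\<bar> \<le> 1" using pq pos
    by (simp add: abs_le_iff divide_le_eq le_divide_eq)
  then have "- 1 \<le> - (1 - q^2 * p^2) / (1 + q^2 * p^2)" "- (1 - q^2 * p^2) / (1 + q^2 * p^2) \<le> 1" unfolding abs_le_iff by linarith+
  then show "cos (arccos (- (1 - q^2 * p^2) / (1 + q^2 * p^2))) = - (1 - q^2 * p^2) / (1 + q^2 * p^2)"
    by (rule cos_arccos)
  have "sqrt (1 - (- (1 - q^2 * p^2) / (1 + q^2 * p^2))^2) = 2 * p * q / (1 + q^2 * p^2)"
    apply (rule real_sqrt_unique)
    subgoal
    proof -
      have D: "1 + q^2 * p^2 \<noteq> 0" using pos by simp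
      show ?thesis using D by (simp add: power_divide divide_simps) algebra
    qed
    using assms pos by simp
  then show "sin (arccos (- (1 - q^2 * p^2) / (1 + q^2 * p^2))) = 2 * p * q / (1 + q^2 * p^2)"
    using b by (simp add: sin_arccos_abs)
qed

lemma PX_l: fixes X Y Z V :: "real^3" shows "V = a *\<^sub>R X + b *\<^sub>R Y + d *\<^sub>R Z \<Longrightarrow> k *\<^sub>R V - X = (k*a - 1) *\<^sub>R X + (k*b) *\<^sub>R Y + (k*d) *\<^sub>R Z"
  by (simp add: vec_eq_iff algebra_simps)
lemma PY_l: fixes X Y Z V :: "real^3" shows "V = a *\<^sub>R X + b *\<^sub>R Y + d *\<^sub>R Z \<Longrightarrow> k *\<^sub>R V - Y = (k*a) *\<^sub>R X + (k*b - 1) *\<^sub>R Y + (k*d) *\<^sub>R Z"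
  by (simp add: vec_eq_iff algebra_simps)
lemma PZ_l: fixes X Y Z V :: "real^3" shows "V = a *\<^sub>R X + b *\<^sub>R Y + d *\<^sub>R Z \<Longrightarrow> k *\<^sub>R V - Z = (k*a) *\<^sub>R X + (k*b) *\<^sub>R Y + (k*d - 1) *\<^sub>R Z"
  by (simp add: vec_eq_iff algebra_simps)



theorem proposition4p5:
  fixes X Y :: "real^3" and \<alpha> \<kappa> c tX tY :: real and W :: "real^3"
  assumes X1: "norm X = 1" and Y1: "norm Y = 1"
    and \<alpha>: "0 < \<alpha>" "\<alpha> \<le> pi / 2" and angle: "X \<bullet> Y = cos \<alpha>"
    and \<kappa>: "0 \<le> \<kappa>" "\<kappa> \<le> 1"
    and c_def: "c = cos \<alpha>"
    and W_def: "W = (1 + \<kappa> * c) *\<^sub>R X - (\<kappa> + c) *\<^sub>R Y"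
    and pos: "c + \<kappa> > 0"
    and tX_def: "tX = arccos ((c - \<kappa>) / (c + \<kappa>))"
    and tY_def: "tY = arccos (- (1 - \<kappa> * c) / (1 + \<kappa> * c))"
  shows
    "(\<exists>u. norm u = 1 \<and> u \<bullet> W = 0 \<and> rot (tX *\<^sub>R X) \<circ> rot (tY *\<^sub>R Y) = rot (pi *\<^sub>R u))
     \<and> (\<exists>u. norm u = 1 \<and> u \<bullet> W = 0 \<and> rot (tY *\<^sub>R Y) \<circ> rot (tX *\<^sub>R X) = rot (pi *\<^sub>R u))
     \<and> rot (tX *\<^sub>R X) \<circ> rot (tY *\<^sub>R Y) = rot ((- tY) *\<^sub>R Y) \<circ> rot ((- tX) *\<^sub>R X)
     \<and> rot (tY *\<^sub>R Y) \<circ> rot (tX *\<^sub>R X) = rot ((- tX) *\<^sub>R X) \<circ> rot ((- tY) *\<^sub>R Y)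
     \<and> (\<forall>t::real. rot (tY *\<^sub>R Y) \<circ> rot (tX *\<^sub>R X) \<circ> rot (t *\<^sub>R W)
                 = rot ((- t) *\<^sub>R W) \<circ> rot (tY *\<^sub>R Y) \<circ> rot (tX *\<^sub>R X))
     \<and> (\<forall>t::real. rot (tX *\<^sub>R X) \<circ> rot (tY *\<^sub>R Y) \<circ> rot ((- t) *\<^sub>R W)
                 = rot (t *\<^sub>R W) \<circ> rot (tX *\<^sub>R X) \<circ> rot (tY *\<^sub>R Y))
     \<and> (\<kappa> = 0 \<longrightarrow> (\<forall>t::real. rot (pi *\<^sub>R Y) \<circ> rot (t *\<^sub>R W)
                 = rot ((- t) *\<^sub>R W) \<circ> rot (pi *\<^sub>R Y)))"
proof -
  have XX: "X \<bullet> X = 1" using X1 by (simp add: norm_eq_1)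
  have YY: "Y \<bullet> Y = 1" using Y1 by (simp add: norm_eq_1)
  have XY: "X \<bullet> Y = c" using angle c_def by simp
  have YX: "Y \<bullet> X = c" using XY by (simp add: inner_commute)
  have c0: "0 \<le> c" unfolding c_def using \<alpha> by (intro cos_ge_zero) auto
  have c1: "c < 1" unfolding c_def using cos_monotone_0_pi[of 0 \<alpha>] \<alpha> pi_gt_zero by auto
  define p where "p = sqrt c"
  define q where "q = sqrt \<kappa>"
  have p0: "0 \<le> p" and q0: "0 \<le> q" using c0 \<kappa> by (simp_all add: p_def q_def)
  have cp: "c = p^2" using c0 by (simp add: p_def)
  have kq: "\<kappa> = q^2" using \<kappa> by (simp add: q_def)
  have p1: "p^2 < 1" using c1 cp by simp
  have q1: "q^2 \<le> 1" using \<kappa> kq by simp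
  have pq0: "p^2 + q^2 > 0" using pos cp kq by simp
  have D2: "1 + q^2 * p^2 > 0" by (simp add: add_pos_nonneg)
  have nz1: "p^2 + q^2 \<noteq> 0" using pq0 by linarith
  have nz2: "1 + q^2 * p^2 \<noteq> 0" using D2 by linarith
  have tX': "tX = arccos ((p^2 - q^2) / (p^2 + q^2))" using tX_def cp kq by simp
  have tY': "tY = arccos (- (1 - q^2 * p^2) / (1 + q^2 * p^2))" using tY_def cp kq by simp
  have caX: "cos tX = (p^2 - q^2) / (p^2 + q^2)" using trigX(1)[OF p0 q0 pq0] tX' by simp
  have saX: "sin tX = 2 * p * q / (p^2 + q^2)" using trigX(2)[OF p0 q0 pq0] tX' by simp
  have cbY: "cos tY = - (1 - q^2 * p^2) / (1 + q^2 * p^2)" using trigY(1)[OF p0 q0 p1 q1] tY' by simp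
  have sbY: "sin tY = 2 * p * q / (1 + q^2 * p^2)" using trigY(2)[OF p0 q0 p1 q1] tY' by simp
  define Z where "Z = cross3 X Y"
  have XZ: "X \<bullet> Z = 0" "Z \<bullet> X = 0" unfolding Z_def by (simp_all add: dot_cross_self inner_commute)
  have YZ: "Y \<bullet> Z = 0" "Z \<bullet> Y = 0" unfolding Z_def by (simp_all add: dot_cross_self inner_commute)
  have ZZ: "Z \<bullet> Z = 1 - c^2"
  proof -
    have "(norm Z)^2 + c^2 = 1" using norm_cross_dot[of X Y] X1 Y1 XY by (simp add: Z_def)
    then show ?thesis by (simp add: power2_norm_eq_inner)
  qed
  have XZc: "cross3 X Z = c *\<^sub>R X - Y" unfolding Z_def by (simp add: Lagrange XX XY)
  have YZc: "cross3 Y Z = X - c *\<^sub>R Y" unfolding Z_def by (simp add: Lagrange YY YX)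
  have YXc: "cross3 Y X = - Z" unfolding Z_def by (simp add: cross_skew[of Y X])
  have trip: "X \<bullet> cross3 Y Z \<noteq> 0"
  proof -
    have "X \<bullet> cross3 Y Z = Z \<bullet> Z" using cross_triple[of X Y Z] by (simp add: Z_def inner_commute)
    also have "\<dots> > 0" using ZZ c0 c1 by (simp add: abs_square_less_1)
    finally show ?thesis by simp
  qed
  have AX: "rot (tX *\<^sub>R X) X = 1 *\<^sub>R X + 0 *\<^sub>R Y + 0 *\<^sub>R Z" by (simp add: rot_unit[OF X1] XX algebra_simps)
  have AY: "rot (tX *\<^sub>R X) Y = ((1 - cos tX) * c) *\<^sub>R X + cos tX *\<^sub>R Y + sin tX *\<^sub>R Z"
    by (simp add: rot_unit[OF X1] XY Z_def algebra_simps)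
  have AZ: "rot (tX *\<^sub>R X) Z = (sin tX * c) *\<^sub>R X + (- sin tX) *\<^sub>R Y + cos tX *\<^sub>R Z"
    by (simp add: rot_unit[OF X1] XZ XZc algebra_simps)
  have BX: "rot (tY *\<^sub>R Y) X = cos tY *\<^sub>R X + ((1 - cos tY) * c) *\<^sub>R Y + (- sin tY) *\<^sub>R Z"
    by (simp add: rot_unit[OF Y1] YX YXc algebra_simps)
  have BY: "rot (tY *\<^sub>R Y) Y = 0 *\<^sub>R X + 1 *\<^sub>R Y + 0 *\<^sub>R Z" by (simp add: rot_unit[OF Y1] YY algebra_simps)
  have BZ: "rot (tY *\<^sub>R Y) Z = sin tY *\<^sub>R X + (- sin tY * c) *\<^sub>R Y + cos tY *\<^sub>R Z"
    by (simp add: rot_unit[OF Y1] YZ YZc algebra_simps)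
  define V1 where "V1 = (q^2 * p) *\<^sub>R X + p *\<^sub>R Y + q *\<^sub>R Z"
  define V2 where "V2 = (q^2 * p) *\<^sub>R X + p *\<^sub>R Y + (- q) *\<^sub>R Z"
  have V1X: "V1 \<bullet> X = q^2 * p + p * c" unfolding V1_def by (simp add: inner_add_left inner_diff_left XX YX XZ)
  have V1Y: "V1 \<bullet> Y = q^2 * p * c + p" unfolding V1_def by (simp add: inner_add_left inner_diff_left XY YY YZ)
  have V1Z: "V1 \<bullet> Z = q * (1 - c^2)" unfolding V1_def by (simp add: inner_add_left inner_diff_left XZ YZ ZZ)
  have V2X: "V2 \<bullet> X = q^2 * p + p * c" unfolding V2_def by (simp add: inner_add_left inner_diff_left XX YX XZ)
  have V2Y: "V2 \<bullet> Y = q^2 * p * c + p" unfolding V2_def by (simp add: inner_add_left inner_diff_left XY YY YZ)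
  have V2Z: "V2 \<bullet> Z = - q * (1 - c^2)" unfolding V2_def by (simp add: inner_add_left inner_diff_left XZ YZ ZZ)
  have V1V1: "V1 \<bullet> V1 = (p^2 + q^2) * (1 + q^2 * p^2)"
  proof -
    have "V1 \<bullet> V1 = (q^2 * p) * (V1 \<bullet> X) + p * (V1 \<bullet> Y) + q * (V1 \<bullet> Z)"
      by (subst (2) V1_def) (simp add: inner_add_right inner_diff_right)
    then show ?thesis unfolding V1X V1Y V1Z cp by algebra
  qed
  have V2V2: "V2 \<bullet> V2 = (p^2 + q^2) * (1 + q^2 * p^2)"
  proof -
    have "V2 \<bullet> V2 = (q^2 * p) * (V2 \<bullet> X) + p * (V2 \<bullet> Y) + (- q) * (V2 \<bullet> Z)"
      by (subst (2) V2_def) (simp add: inner_add_right inner_diff_right)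
    then show ?thesis unfolding V2X V2Y V2Z cp by algebra
  qed
  have V1pos: "V1 \<bullet> V1 > 0" unfolding V1V1 using pq0 D2 by simp
  have V2pos: "V2 \<bullet> V2 > 0" unfolding V2V2 using pq0 D2 by simp
  define k1X where "k1X = 2 * (V1 \<bullet> X) / (V1 \<bullet> V1)"
  define k1Y where "k1Y = 2 * (V1 \<bullet> Y) / (V1 \<bullet> V1)"
  define k1Z where "k1Z = 2 * (V1 \<bullet> Z) / (V1 \<bullet> V1)"
  define k2X where "k2X = 2 * (V2 \<bullet> X) / (V2 \<bullet> V2)"
  define k2Y where "k2Y = 2 * (V2 \<bullet> Y) / (V2 \<bullet> V2)"
  define k2Z where "k2Z = 2 * (V2 \<bullet> Z) / (V2 \<bullet> V2)"
  define u1 where "u1 = (1 / norm V1) *\<^sub>R V1"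
  define u2 where "u2 = (1 / norm V2) *\<^sub>R V2"
  have P1X: "rot (pi *\<^sub>R u1) X = (k1X * (q^2 * p) - 1) *\<^sub>R X + (k1X * p) *\<^sub>R Y + (k1X * q) *\<^sub>R Z"
    unfolding u1_def rot_pi_V(2)[OF V1pos] k1X_def by (rule PX_l[OF V1_def])
  have P1Y: "rot (pi *\<^sub>R u1) Y = (k1Y * (q^2 * p)) *\<^sub>R X + (k1Y * p - 1) *\<^sub>R Y + (k1Y * q) *\<^sub>R Z"
    unfolding u1_def rot_pi_V(2)[OF V1pos] k1Y_def by (rule PY_l[OF V1_def])
  have P1Z: "rot (pi *\<^sub>R u1) Z = (k1Z * (q^2 * p)) *\<^sub>R X + (k1Z * p) *\<^sub>R Y + (k1Z * q - 1) *\<^sub>R Z"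
    unfolding u1_def rot_pi_V(2)[OF V1pos] k1Z_def by (rule PZ_l[OF V1_def])
  have P2X: "rot (pi *\<^sub>R u2) X = (k2X * (q^2 * p) - 1) *\<^sub>R X + (k2X * p) *\<^sub>R Y + (k2X * (- q)) *\<^sub>R Z"
    unfolding u2_def rot_pi_V(2)[OF V2pos] k2X_def by (rule PX_l[OF V2_def])
  have P2Y: "rot (pi *\<^sub>R u2) Y = (k2Y * (q^2 * p)) *\<^sub>R X + (k2Y * p - 1) *\<^sub>R Y + (k2Y * (- q)) *\<^sub>R Z"
    unfolding u2_def rot_pi_V(2)[OF V2pos] k2Y_def by (rule PY_l[OF V2_def])
  have P2Z: "rot (pi *\<^sub>R u2) Z = (k2Z * (q^2 * p)) *\<^sub>R X + (k2Z * p) *\<^sub>R Y + (k2Z * (- q) - 1) *\<^sub>R Z"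
    unfolding u2_def rot_pi_V(2)[OF V2pos] k2Z_def by (rule PZ_l[OF V2_def])
  define s where "s = p^2 + q^2"
  define D where "D = 1 + q^2 * p^2"
  have snz: "s \<noteq> 0" and Dnz: "D \<noteq> 0" using nz1 nz2 by (simp_all add: s_def D_def)
  have caX': "cos tX = (p^2 - q^2) / s" and saX': "sin tX = 2 * p * q / s"
    and cbY': "cos tY = - (1 - q^2 * p^2) / D" and sbY': "sin tY = 2 * p * q / D"
    and V1V1': "V1 \<bullet> V1 = s * D" and V2V2': "V2 \<bullet> V2 = s * D"
    using caX saX cbY sbY V1V1 V2V2 by (simp_all add: s_def D_def)
  note sc = k1X_def k1Y_def k1Z_def k2X_def k2Y_def k2Z_def V1X V1Y V1Z V2X V2Y V2Z V1V1' V2V2' caX' saX' cbY' sbY' cp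
  have M1X: "rot (tX *\<^sub>R X) (rot (tY *\<^sub>R Y) X) = rot (pi *\<^sub>R u1) X"
    unfolding BX comb3[OF linear_rot AX AY AZ] P1X by (rule combeq; simp add: sc; simp add: field_simps snz Dnz; insert s_def D_def; algebra)
  have M1Y: "rot (tX *\<^sub>R X) (rot (tY *\<^sub>R Y) Y) = rot (pi *\<^sub>R u1) Y"
    unfolding BY comb3[OF linear_rot AX AY AZ] P1Y by (rule combeq; simp add: sc; simp add: field_simps snz Dnz; insert s_def D_def; algebra)
  have M1Z: "rot (tX *\<^sub>R X) (rot (tY *\<^sub>R Y) Z) = rot (pi *\<^sub>R u1) Z"
    unfolding BZ comb3[OF linear_rot AX AY AZ] P1Z by (rule combeq; simp add: sc; simp add: field_simps snz Dnz; insert s_def D_def; algebra)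
  have M2X: "rot (tY *\<^sub>R Y) (rot (tX *\<^sub>R X) X) = rot (pi *\<^sub>R u2) X"
    unfolding AX comb3[OF linear_rot BX BY BZ] P2X by (rule combeq; simp add: sc; simp add: field_simps snz Dnz; insert s_def D_def; algebra)
  have M2Y: "rot (tY *\<^sub>R Y) (rot (tX *\<^sub>R X) Y) = rot (pi *\<^sub>R u2) Y"
    unfolding AY comb3[OF linear_rot BX BY BZ] P2Y by (rule combeq; simp add: sc; simp add: field_simps snz Dnz; insert s_def D_def; algebra)
  have M2Z: "rot (tY *\<^sub>R Y) (rot (tX *\<^sub>R X) Z) = rot (pi *\<^sub>R u2) Z"
    unfolding AZ comb3[OF linear_rot BX BY BZ] P2Z by (rule combeq; simp add: sc; simp add: field_simps snz Dnz; insert s_def D_def; algebra)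
  have u1n: "norm u1 = 1" unfolding u1_def by (rule rot_pi_V(1)[OF V1pos])
  have u2n: "norm u2 = 1" unfolding u2_def by (rule rot_pi_V(1)[OF V2pos])
  have V1W: "V1 \<bullet> W = 0"
    unfolding W_def by (simp add: inner_diff_right V1X[unfolded inner_commute[of V1]] inner_commute[of _ V1] V1X V1Y cp kq; algebra)
  have V2W: "V2 \<bullet> W = 0"
    unfolding W_def by (simp add: inner_diff_right inner_commute[of _ V2] V2X V2Y cp kq; algebra)
  have u1W: "u1 \<bullet> W = 0" unfolding u1_def using V1W by simp
  have u2W: "u2 \<bullet> W = 0" unfolding u2_def using V2W by simp
  have AB: "rot (tX *\<^sub>R X) \<circ> rot (tY *\<^sub>R Y) = rot (pi *\<^sub>R u1)"
    by (rule basis_ext[OF linear_compose[OF linear_rot linear_rot] linear_rot trip]) (simp_all add: M1X M1Y M1Z)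
  have BA: "rot (tY *\<^sub>R Y) \<circ> rot (tX *\<^sub>R X) = rot (pi *\<^sub>R u2)"
    by (rule basis_ext[OF linear_compose[OF linear_rot linear_rot] linear_rot trip]) (simp_all add: M2X M2Y M2Z)
  have Ai1: "rot ((- tX) *\<^sub>R X) (rot (tX *\<^sub>R X) x) = x" for x by (rule rot_inv[OF X1])
  have Ai2: "rot (tX *\<^sub>R X) (rot ((- tX) *\<^sub>R X) x) = x" for x using rot_inv[OF X1, of "- tX" x] by simp
  have Bi1: "rot ((- tY) *\<^sub>R Y) (rot (tY *\<^sub>R Y) x) = x" for x by (rule rot_inv[OF Y1])
  have Bi2: "rot (tY *\<^sub>R Y) (rot ((- tY) *\<^sub>R Y) x) = x" for x using rot_inv[OF Y1, of "- tY" x] by simp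
  have AB': "rot (tX *\<^sub>R X) (rot (tY *\<^sub>R Y) x) = rot (pi *\<^sub>R u1) x" for x
    using fun_cong[OF AB, of x] by simp
  have BA': "rot (tY *\<^sub>R Y) (rot (tX *\<^sub>R X) x) = rot (pi *\<^sub>R u2) x" for x
    using fun_cong[OF BA, of x] by simp
  have E1: "rot (tX *\<^sub>R X) \<circ> rot (tY *\<^sub>R Y) = rot ((- tY) *\<^sub>R Y) \<circ> rot ((- tX) *\<^sub>R X)"
  proof
    fix x :: "real^3"
    have "rot (pi *\<^sub>R u1) (rot ((- tY) *\<^sub>R Y) (rot ((- tX) *\<^sub>R X) x)) = x"
      by (simp only: AB'[symmetric] Bi2 Ai2)
    then have "rot ((- tY) *\<^sub>R Y) (rot ((- tX) *\<^sub>R X) x) = rot (pi *\<^sub>R u1) x"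
      using P_invol[OF u1n] by metis
    then show "(rot (tX *\<^sub>R X) \<circ> rot (tY *\<^sub>R Y)) x = (rot ((- tY) *\<^sub>R Y) \<circ> rot ((- tX) *\<^sub>R X)) x"
      by (simp add: AB')
  qed
  have E2: "rot (tY *\<^sub>R Y) \<circ> rot (tX *\<^sub>R X) = rot ((- tX) *\<^sub>R X) \<circ> rot ((- tY) *\<^sub>R Y)"
  proof
    fix x :: "real^3"
    have "rot (pi *\<^sub>R u2) (rot ((- tX) *\<^sub>R X) (rot ((- tY) *\<^sub>R Y) x)) = x"
      by (simp only: BA'[symmetric] Bi2 Ai2)
    then have "rot ((- tX) *\<^sub>R X) (rot ((- tY) *\<^sub>R Y) x) = rot (pi *\<^sub>R u2) x"
      using P_invol[OF u2n] by metis
    then show "(rot (tY *\<^sub>R Y) \<circ> rot (tX *\<^sub>R X)) x = (rot ((- tX) *\<^sub>R X) \<circ> rot ((- tY) *\<^sub>R Y)) x"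
      by (simp add: BA')
  qed
  have E3: "\<forall>r::real. rot (tY *\<^sub>R Y) \<circ> rot (tX *\<^sub>R X) \<circ> rot (r *\<^sub>R W)
                 = rot ((- r) *\<^sub>R W) \<circ> rot (tY *\<^sub>R Y) \<circ> rot (tX *\<^sub>R X)"
  proof (intro allI ext)
    fix r :: real and x :: "real^3"
    have "u2 \<bullet> (r *\<^sub>R W) = 0" using u2W by simp
    from P_conj[OF u2n this, of x] show "(rot (tY *\<^sub>R Y) \<circ> rot (tX *\<^sub>R X) \<circ> rot (r *\<^sub>R W)) x
                 = (rot ((- r) *\<^sub>R W) \<circ> rot (tY *\<^sub>R Y) \<circ> rot (tX *\<^sub>R X)) x"
      by (simp add: BA')
  qed
  have E4: "\<forall>r::real. rot (tX *\<^sub>R X) \<circ> rot (tY *\<^sub>R Y) \<circ> rot ((- r) *\<^sub>R W)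
                 = rot (r *\<^sub>R W) \<circ> rot (tX *\<^sub>R X) \<circ> rot (tY *\<^sub>R Y)"
  proof (intro allI ext)
    fix r :: real and x :: "real^3"
    have "u1 \<bullet> ((- r) *\<^sub>R W) = 0" using u1W by simp
    from P_conj[OF u1n this, of x] show "(rot (tX *\<^sub>R X) \<circ> rot (tY *\<^sub>R Y) \<circ> rot ((- r) *\<^sub>R W)) x
                 = (rot (r *\<^sub>R W) \<circ> rot (tX *\<^sub>R X) \<circ> rot (tY *\<^sub>R Y)) x"
      by (simp add: AB')
  qed
  have E5: "\<kappa> = 0 \<longrightarrow> (\<forall>r::real. rot (pi *\<^sub>R Y) \<circ> rot (r *\<^sub>R W)
                 = rot ((- r) *\<^sub>R W) \<circ> rot (pi *\<^sub>R Y))"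
  proof (intro impI allI ext)
    fix r :: real and x :: "real^3"
    assume k0: "\<kappa> = 0"
    have "Y \<bullet> (r *\<^sub>R W) = 0" using k0 unfolding W_def by (simp add: inner_diff_right YX YY)
    from P_conj[OF Y1 this, of x] show "(rot (pi *\<^sub>R Y) \<circ> rot (r *\<^sub>R W)) x = (rot ((- r) *\<^sub>R W) \<circ> rot (pi *\<^sub>R Y)) x"
      by simp
  qed
  show ?thesis using AB BA u1n u2n u1W u2W E1 E2 E3 E4 E5 by blast
qed

end
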